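(* Let $d\ge 3$, let $\Delta$ be a simplicial $(d-1)$-sphere with facet-ridge graph $G$, $|V(G)|=n$, and let $\mathcal{O}$ be a good acyclic orientation of $G$. Let $t_1$ be the unique sink of $G$ with respect to $\mathcal{O}$, and for $2\le i\le n$ recursively let $t_i$ be any sink of the induced subgraph $G[V(G)\setminus\{t_1,\dots,t_{i-1}\}]$ (with the induced orientation). Let $T_i$ be the facet of $\Delta$ corresponding to $t_i$. Then $T_1,\dots,T_n$ is a shelling of $\Delta$.
   Context: $\Delta$ is a simplicial complex whose geometric realization is homeomorphic to the $(d-1)$-sphere; facets are its maximal faces ($d$ elements), ridges are faces with $d-1$ elements. The facet-ridge graph $G$ has the facets as vertices, two adjacent iff they share a ridge; vertex $t$ of $G$ corresponds to facet $T$. Shelling: a total ordering $T_1,\dots,T_n$ of the facets such that for each $2\le i\le n$, $\overline{T}_i\cap(\overline{T}_1\cup\cdots\cup\overline{T}_{i-1})$ is a pure $(d-2)$-dimensional simplicial complex, where $\overline{T}$ is the set of all subsets of $T$. For $0\le k\le d$ and a face $\sigma$ with $|\sigma|=d-k$, $\mathcal{V}^\Delta_k(\sigma)$ is the set of vertices of $G$ corresponding to facets containing $\sigma$. An orientation $\mathcal{O}$ of $G$ is good if for every such $k$ and $\sigma$ the induced orientation on $G[\mathcal{V}^\Delta_k(\sigma)]$ has exactly one sink (in particular, taking $\sigma=\emptyset$, $G$ has exactly one sink); acyclic means no directed cycle. *)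

theory Defs
  imports "HOL-Analysis.Analysis"
begin

definition simplicial_complex :: "'a set set \<Rightarrow> bool" where
  "simplicial_complex \<Delta> \<longleftrightarrow> finite \<Delta> \<and> \<Delta> \<noteq> {} \<and> (\<forall>F\<in>\<Delta>. finite F) \<and>
     (\<forall>F\<in>\<Delta>. \<forall>G. G \<subseteq> F \<longrightarrow> G \<in> \<Delta>)"

text \<open>Geometric realization: points are barycentric-coordinate functions whose support is a face.\<close>
definition geom_realization :: "'a set set \<Rightarrow> ('a \<Rightarrow> real) set" where
  "geom_realization \<Delta> = {x. (\<forall>v. 0 \<le> x v) \<and> {v. x v \<noteq> 0} \<in> \<Delta> \<and> sum x {v. x v \<noteq> 0} = 1}"

definition realization_top :: "'a set set \<Rightarrow> ('a \<Rightarrow> real) topology" where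
  "realization_top \<Delta> = subtopology (powertop_real UNIV) (geom_realization \<Delta>)"

definition simplicial_sphere :: "'a set set \<Rightarrow> nat \<Rightarrow> bool" where
  "simplicial_sphere \<Delta> d \<longleftrightarrow> simplicial_complex \<Delta> \<and> d \<ge> 1 \<and>
     realization_top \<Delta> homeomorphic_space nsphere (d - 1)"

definition facets :: "'a set set \<Rightarrow> 'a set set" where
  "facets \<Delta> = {F\<in>\<Delta>. \<forall>G\<in>\<Delta>. F \<subseteq> G \<longrightarrow> G = F}"

definition fr_adj :: "'a set set \<Rightarrow> nat \<Rightarrow> 'a set \<Rightarrow> 'a set \<Rightarrow> bool" where
  "fr_adj \<Delta> d F G \<longleftrightarrow> F \<in> facets \<Delta> \<and> G \<in> facets \<Delta> \<and> F \<noteq> G \<and>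
     (\<exists>R\<in>\<Delta>. card R = d - 1 \<and> R \<subseteq> F \<and> R \<subseteq> G)"

definition fr_orientation :: "'a set set \<Rightarrow> nat \<Rightarrow> ('a set \<times> 'a set) set \<Rightarrow> bool" where
  "fr_orientation \<Delta> d Ori \<longleftrightarrow> (\<forall>(F,G)\<in>Ori. fr_adj \<Delta> d F G) \<and>
     (\<forall>F G. fr_adj \<Delta> d F G \<longrightarrow> ((F,G) \<in> Ori \<longleftrightarrow> (G,F) \<notin> Ori))"

definition is_sink :: "('a set \<times> 'a set) set \<Rightarrow> 'a set set \<Rightarrow> 'a set \<Rightarrow> bool" where
  "is_sink Ori W t \<longleftrightarrow> t \<in> W \<and> (\<forall>u\<in>W. (t,u) \<notin> Ori)"

definition Vk :: "'a set set \<Rightarrow> 'a set \<Rightarrow> 'a set set" where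
  "Vk \<Delta> \<sigma> = {F\<in>facets \<Delta>. \<sigma> \<subseteq> F}"

definition good_orientation :: "'a set set \<Rightarrow> nat \<Rightarrow> ('a set \<times> 'a set) set \<Rightarrow> bool" where
  "good_orientation \<Delta> d Ori \<longleftrightarrow> fr_orientation \<Delta> d Ori \<and>
     (\<forall>k\<le>d. \<forall>\<sigma>\<in>\<Delta>. card \<sigma> = d - k \<longrightarrow> (\<exists>!t. is_sink Ori (Vk \<Delta> \<sigma>) t))"

definition pure_dim :: "'a set set \<Rightarrow> nat \<Rightarrow> bool" where
  "pure_dim K m \<longleftrightarrow> (\<forall>F\<in>K. \<exists>G\<in>K. F \<subseteq> G \<and> card G = m + 1) \<and> (\<forall>G\<in>K. card G \<le> m + 1)"

definition is_shelling :: "'a set set \<Rightarrow> nat \<Rightarrow> (nat \<Rightarrow> 'a set) \<Rightarrow> nat \<Rightarrow> bool" where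
  "is_shelling \<Delta> d T n \<longleftrightarrow> bij_betw T {1..n} (facets \<Delta>) \<and>
     (\<forall>i\<in>{2..n}. pure_dim (Pow (T i) \<inter> (\<Union>j\<in>{1..<i}. Pow (T j))) (d - 2))"

end

theory Submission
  imports Defs
begin

theorem proposition3p2:
  fixes \<Delta> :: "'a set set" and d n :: nat
    and Ori :: "('a set \<times> 'a set) set" and t :: "nat \<Rightarrow> 'a set"
  assumes "d \<ge> 3"
    and "simplicial_sphere \<Delta> d"
    and "\<forall>F\<in>facets \<Delta>. card F = d"
    and "n = card (facets \<Delta>)"
    and "good_orientation \<Delta> d Ori"
    and "acyclic Ori"
    and "\<forall>i\<in>{1..n}. is_sink Ori (facets \<Delta> - t ` {1..<i}) (t i)"
  shows "is_shelling \<Delta> d t n"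
proof -
  note A = assms
  have sc: "simplicial_complex \<Delta>" using A(2) by (simp add: simplicial_sphere_def)
  have finD: "finite \<Delta>" and clos: "\<And>F G. F \<in> \<Delta> \<Longrightarrow> G \<subseteq> F \<Longrightarrow> G \<in> \<Delta>"
    using sc by (auto simp: simplicial_complex_def)
  have finF: "finite (facets \<Delta>)" using finD by (simp add: facets_def)
  have facD: "\<And>F. F \<in> facets \<Delta> \<Longrightarrow> F \<in> \<Delta>" by (simp add: facets_def)
  have cardF: "\<And>F. F \<in> facets \<Delta> \<Longrightarrow> card F = d" using A(3) by blast
  have finT: "\<And>F. F \<in> facets \<Delta> \<Longrightarrow> finite F" using cardF A(1)
    by (metis card.infinite not_numeral_le_zero)
  have tin: "\<And>i. i \<in> {1..n} \<Longrightarrow> t i \<in> facets \<Delta>" using A(7) by (auto simp: is_sink_def)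
  have tnot: "\<And>i j. i \<in> {1..n} \<Longrightarrow> j \<in> {1..<i} \<Longrightarrow> t i \<noteq> t j"
  proof -
    fix i j assume "i \<in> {1..n}" "j \<in> {1..<i}"
    then have "t i \<notin> t ` {1..<i}" using A(7) by (simp add: is_sink_def)
    then show "t i \<noteq> t j" using \<open>j \<in> {1..<i}\<close> by blast
  qed
  have tsink: "\<And>i u. i \<in> {1..n} \<Longrightarrow> u \<in> facets \<Delta> - t ` {1..<i} \<Longrightarrow> (t i, u) \<notin> Ori"
    using A(7) by (auto simp: is_sink_def)
  have inj: "inj_on t {1..n}"
  proof (rule inj_onI)
    fix i j assume "i \<in> {1..n}" "j \<in> {1..n}" "t i = t j"
    then show "i = j" using tnot[of i j] tnot[of j i]
      by (metis atLeastAtMost_iff atLeastLessThan_iff linorder_neqE_nat)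
  qed
  have bij: "bij_betw t {1..n} (facets \<Delta>)"
  proof -
    have "t ` {1..n} \<subseteq> facets \<Delta>" using tin by blast
    moreover have "card (t ` {1..n}) = card (facets \<Delta>)"
      using card_image[OF inj] A(4) by simp
    ultimately have "t ` {1..n} = facets \<Delta>" using finF by (simp add: card_subset_eq)
    then show ?thesis using inj by (simp add: bij_betw_def)
  qed
  have gs: "\<And>\<sigma>. \<sigma> \<in> \<Delta> \<Longrightarrow> card \<sigma> \<le> d \<Longrightarrow> \<exists>!s. is_sink Ori (Vk \<Delta> \<sigma>) s"
  proof -
    fix \<sigma> assume "\<sigma> \<in> \<Delta>" "card \<sigma> \<le> d"
    then show "\<exists>!s. is_sink Ori (Vk \<Delta> \<sigma>) s"
      using A(5) unfolding good_orientation_def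
      by (metis diff_diff_cancel diff_le_self)
  qed
  have adj: "\<And>F G. (F, G) \<in> Ori \<Longrightarrow> fr_adj \<Delta> d F G"
    using A(5) by (auto simp: good_orientation_def fr_orientation_def)
  have key: "\<exists>R. R \<subseteq> t i \<and> (\<exists>l\<in>{1..<i}. R \<subseteq> t l) \<and> X \<subseteq> R \<and> card R = d - 1"
    if i: "i \<in> {2..n}" and X: "X \<subseteq> t i" and j: "j \<in> {1..<i}" "X \<subseteq> t j" for i j X
  proof -
    define S where "S = t i \<inter> t j"
    define V where "V = Vk \<Delta> S"
    have i1: "i \<in> {1..n}" using i by auto
    have j1: "j \<in> {1..n}" using i j by auto
    have SD: "S \<in> \<Delta>" using clos[OF facD[OF tin[OF i1]]] S_def by blast
    have cS: "card S \<le> d" using card_mono[OF finT[OF tin[OF i1]]] cardF[OF tin[OF i1]] S_def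
      by (metis inf_le1)
    have tiV: "t i \<in> V" using tin[OF i1] by (auto simp: V_def Vk_def S_def)
    have tjV: "t j \<in> V" using tin[OF j1] by (auto simp: V_def Vk_def S_def)
    define M where "M = {l \<in> {1..n}. t l \<in> V}"
    define m where "m = Min M"
    have finM: "finite M" by (simp add: M_def)
    have jM: "j \<in> M" using j1 tjV by (simp add: M_def)
    have mM: "m \<in> M" using finM jM m_def Min_in by blast
    have mj: "m \<le> j" using finM jM m_def by simp
    have m1: "m \<in> {1..n}" using mM M_def by simp
    have Vsub: "V \<subseteq> facets \<Delta> - t ` {1..<m}"
    proof
      fix v assume v: "v \<in> V"
      then have vF: "v \<in> facets \<Delta>" by (simp add: V_def Vk_def)
      moreover have "v \<notin> t ` {1..<m}"
      proof
        assume "v \<in> t ` {1..<m}"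
        then obtain l where l: "l \<in> {1..<m}" "v = t l" by blast
        then have "l \<in> M" using v m1 by (auto simp: M_def)
        then have "m \<le> l" using finM m_def by simp
        then show False using l by simp
      qed
      ultimately show "v \<in> facets \<Delta> - t ` {1..<m}" by blast
    qed
    have smV: "is_sink Ori V (t m)"
      using mM tsink[OF m1] Vsub by (auto simp: is_sink_def M_def)
    have "\<not> is_sink Ori V (t i)"
    proof
      assume "is_sink Ori V (t i)"
      then have "t i = t m" using smV gs[OF SD cS] V_def by blast
      then have "i = m" using inj i1 m1 by (meson inj_onD)
      then show False using mj j by simp
    qed
    then obtain u where uV: "u \<in> V" and tu: "(t i, u) \<in> Ori"
      using tiV by (auto simp: is_sink_def)
    have uF: "u \<in> facets \<Delta>" using uV by (simp add: V_def Vk_def)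
    have "u \<in> t ` {1..<i}" using tsink[OF i1, of u] tu uF by blast
    then obtain l where l: "l \<in> {1..<i}" "u = t l" by blast
    have fa: "fr_adj \<Delta> d (t i) u" using adj[OF tu] .
    then obtain R where R: "card R = d - 1" "R \<subseteq> t i" "R \<subseteq> u" and ne: "t i \<noteq> u"
      by (auto simp: fr_adj_def)
    define R' where "R' = t i \<inter> u"
    have finti: "finite (t i)" using finT[OF tin[OF i1]] .
    have "card R \<le> card R'" using R R'_def finti by (intro card_mono) auto
    moreover have "card R' < d"
    proof -
      have "R' \<subset> t i" using ne cardF[OF tin[OF i1]] cardF[OF uF] R'_def finT[OF uF] finti
        by (metis Int_lower1 Int_lower2 card_subset_eq inf.order_iff psubsetI)
      then show ?thesis using psubset_card_mono[OF finti] cardF[OF tin[OF i1]] by simp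
    qed
    ultimately have cR': "card R' = d - 1" using R(1) by linarith
    have "X \<subseteq> S" using X j S_def by blast
    moreover have "S \<subseteq> u" using uV by (simp add: V_def Vk_def)
    ultimately have "X \<subseteq> R'" using X R'_def by blast
    then show ?thesis using cR' l R'_def by blast
  qed
  have pd: "pure_dim (Pow (t i) \<inter> (\<Union>j\<in>{1..<i}. Pow (t j))) (d - 2)" if i: "i \<in> {2..n}" for i
  proof -
    have dd: "d - 2 + 1 = d - 1" using A(1) by simp
    have i1: "i \<in> {1..n}" using i by auto
    have finti: "finite (t i)" using finT[OF tin[OF i1]] .
    show ?thesis unfolding pure_dim_def dd
    proof (intro conjI ballI)
      fix X assume "X \<in> Pow (t i) \<inter> (\<Union>j\<in>{1..<i}. Pow (t j))"
      then obtain j where "X \<subseteq> t i" "j \<in> {1..<i}" "X \<subseteq> t j" by auto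
      from key[OF i this] obtain R where "R \<subseteq> t i" "\<exists>l\<in>{1..<i}. R \<subseteq> t l" "X \<subseteq> R" "card R = d - 1"
        by blast
      then show "\<exists>G\<in>Pow (t i) \<inter> (\<Union>j\<in>{1..<i}. Pow (t j)). X \<subseteq> G \<and> card G = d - 1" by blast
    next
      fix X assume "X \<in> Pow (t i) \<inter> (\<Union>j\<in>{1..<i}. Pow (t j))"
      then obtain j where X: "X \<subseteq> t i" and j: "j \<in> {1..<i}" and Xj: "X \<subseteq> t j" by auto
      have j1: "j \<in> {1..n}" using i j by auto
      have ne: "t i \<noteq> t j" using tnot[OF i1 j] .
      have "t i \<inter> t j \<subset> t i"
        using ne cardF[OF tin[OF i1]] cardF[OF tin[OF j1]] finT[OF tin[OF j1]] finti
        by (metis Int_lower1 Int_lower2 card_subset_eq inf.order_iff psubsetI)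
      then have "card (t i \<inter> t j) < d" using psubset_card_mono[OF finti] cardF[OF tin[OF i1]] by simp
      moreover have "card X \<le> card (t i \<inter> t j)" using X Xj finti by (intro card_mono) auto
      ultimately show "card X \<le> d - 1" by simp
    qed
  qed
  show ?thesis unfolding is_shelling_def using bij pd by blast
qed

end
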